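(* For all $a,b,c,d\in\mathbb Z$: $a:b::_{SY}c:d$ if and only if $a:b::_m c:d$ holds in $(\mathbb Z,+,\mathbb Z)$.
   Context: $a:b::_{SY}c:d$ means: there exist $k,\ell,o,u\in\mathbb Z$ with $a=k+o$, $b=\ell+o$, $c=k+u$, $d=\ell+u$. $(\mathbb Z,+,\mathbb Z)$ is the algebra with universe $\mathbb Z$, addition, and every integer as a constant. A justification is a pair of terms $s\to t$ with the variables of $t$ among those of $s$; monolinear justifications are those where $s,t$ contain only one fixed variable $x$, occurring at most once in $s$ and at most once in $t$. $\uparrow^m(a\to b)$ is the set of monolinear justifications $s\to t$ with $a=s(\mathbf o)$, $b=t(\mathbf o)$ for some value $\mathbf o$; $\uparrow^m(a\to b:\!\cdot\,c\to d):=\uparrow^m(a\to b)\cap\uparrow^m(c\to d)$. A monolinear justification is trivial if it lies in all sets $\uparrow^m(a'\to b':\!\cdot\,c'\to d')$. $a\to b:\!\cdot_m\,c\to d$ holds iff either (i) all justifications in $\uparrow^m(a\to b)\cup\uparrow^m(c\to d)$ are trivial, or (ii) $J_d:=\uparrow^m(a\to b:\!\cdot\,c\to d)$ contains a non-trivial justification and for every $d'$, $J_d\subseteq J_{d'}$ implies $J_{d'}$ contains a non-trivial justification and $J_{d'}\subseteq J_d$ (ignoring trivial justifications). $a:b::_m c:d$ iff $a\to b:\!\cdot_m\,c\to d$, $b\to a:\!\cdot_m\,d\to c$, $c\to d:\!\cdot_m\,a\to b$, $d\to c:\!\cdot_m\,b\to a$ all hold. *)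

theory Defs
  imports Main
begin

datatype zterm = X | Cst int | Add zterm zterm

fun eval :: "zterm \<Rightarrow> int \<Rightarrow> int" where
  "eval X v = v"
| "eval (Cst k) v = k"
| "eval (Add s t) v = eval s v + eval t v"

fun nocc :: "zterm \<Rightarrow> nat" where
  "nocc X = 1"
| "nocc (Cst k) = 0"
| "nocc (Add s t) = nocc s + nocc t"

text \<open>Monolinear justification s \<rightarrow> t: x occurs at most once in s and at most once
  in t, and the variables of t are among those of s.\<close>
definition monolinear :: "zterm \<times> zterm \<Rightarrow> bool" where
  "monolinear j \<longleftrightarrow> nocc (fst j) \<le> 1 \<and> nocc (snd j) \<le> 1
      \<and> (nocc (snd j) > 0 \<longrightarrow> nocc (fst j) > 0)"

definition upm :: "int \<Rightarrow> int \<Rightarrow> (zterm \<times> zterm) set" where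
  "upm a b = {j. monolinear j \<and> (\<exists>v. eval (fst j) v = a \<and> eval (snd j) v = b)}"

definition upm2 :: "int \<Rightarrow> int \<Rightarrow> int \<Rightarrow> int \<Rightarrow> (zterm \<times> zterm) set" where
  "upm2 a b c d = upm a b \<inter> upm c d"

definition trivial_just :: "zterm \<times> zterm \<Rightarrow> bool" where
  "trivial_just j \<longleftrightarrow> monolinear j \<and> (\<forall>a' b' c' d'. j \<in> upm2 a' b' c' d')"

definition nontriv :: "(zterm \<times> zterm) set \<Rightarrow> (zterm \<times> zterm) set" where
  "nontriv J = {j \<in> J. \<not> trivial_just j}"

definition arrow_analogy :: "int \<Rightarrow> int \<Rightarrow> int \<Rightarrow> int \<Rightarrow> bool" where
  "arrow_analogy a b c d \<longleftrightarrow>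
     (\<forall>j \<in> upm a b \<union> upm c d. trivial_just j)
   \<or> (nontriv (upm2 a b c d) \<noteq> {} \<and>
      (\<forall>d'. nontriv (upm2 a b c d) \<subseteq> nontriv (upm2 a b c d') \<longrightarrow>
             nontriv (upm2 a b c d') \<noteq> {} \<and> nontriv (upm2 a b c d') \<subseteq> nontriv (upm2 a b c d)))"

definition analogy_m :: "int \<Rightarrow> int \<Rightarrow> int \<Rightarrow> int \<Rightarrow> bool" where
  "analogy_m a b c d \<longleftrightarrow> arrow_analogy a b c d \<and> arrow_analogy b a d c
      \<and> arrow_analogy c d a b \<and> arrow_analogy d c b a"

definition analogy_SY :: "int \<Rightarrow> int \<Rightarrow> int \<Rightarrow> int \<Rightarrow> bool" where
  "analogy_SY a b c d \<longleftrightarrow> (\<exists>k l v u. a = k + v \<and> b = l + v \<and> c = k + u \<and> d = l + u)"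

end

theory Submission
  imports Defs
begin

lemma eval_lin: "eval s v = eval s 0 + int (nocc s) * v"
  by (induction s) (auto simp: algebra_simps)

lemma no_triv: "\<not> trivial_just j"
proof
  assume tr: "trivial_just j"
  obtain s t where j: "j = (s, t)" by (cases j)
  have mono: "monolinear j" using tr by (simp add: trivial_just_def)
  have mem: "\<And>a' b'. j \<in> upm a' b'" using tr by (auto simp: trivial_just_def upm2_def)
  show False
  proof (cases "nocc t = 0")
    case True
    from mem[of 0 "eval t 0 + 1"] obtain v where "eval t v = eval t 0 + 1"
      by (auto simp: upm_def j)
    then show False using eval_lin[of t v] True by simp
  next
    case False
    then have "nocc t = 1" "nocc s = 1" using mono by (auto simp: monolinear_def j)
    from mem[of 0 "eval t 0 - eval s 0 + 1"] obtain v where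
      "eval s v = 0" "eval t v = eval t 0 - eval s 0 + 1"
      by (auto simp: upm_def j)
    then show False using eval_lin[of t v] eval_lin[of s v] \<open>nocc t = 1\<close> \<open>nocc s = 1\<close> by simp
  qed
qed

lemma nontriv_id: "nontriv J = J"
  using no_triv by (auto simp: nontriv_def)

lemma mem_XX: "(X, Add X (Cst k)) \<in> upm c d \<longleftrightarrow> d = c + k"
  by (auto simp: upm_def monolinear_def)

lemma arrow_ok:
  assumes "a - b = c - d" shows "arrow_analogy a b c d"
proof -
  have e: "(X, Add X (Cst (b - a))) \<in> upm2 a b c d"
    using assms by (simp add: upm2_def mem_XX)
  have "\<forall>d'. upm2 a b c d \<subseteq> upm2 a b c d' \<longrightarrow>
             upm2 a b c d' \<noteq> {} \<and> upm2 a b c d' \<subseteq> upm2 a b c d"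
  proof (intro allI impI)
    fix d' assume "upm2 a b c d \<subseteq> upm2 a b c d'"
    with e have "(X, Add X (Cst (b - a))) \<in> upm c d'" by (auto simp: upm2_def)
    then have "d' = d" using assms by (simp add: mem_XX)
    then show "upm2 a b c d' \<noteq> {} \<and> upm2 a b c d' \<subseteq> upm2 a b c d" using e by auto
  qed
  then show ?thesis using e by (auto simp: arrow_analogy_def nontriv_id)
qed

lemma arrow_nec:
  assumes "arrow_analogy a b c d" shows "b = d \<or> a - b = c - d"
proof -
  have "(Cst a, Cst b) \<in> upm a b" by (simp add: upm_def monolinear_def)
  then have "upm2 a b c d \<noteq> {}" using assms no_triv
    by (auto simp: arrow_analogy_def nontriv_id)
  then obtain s t where st: "(s, t) \<in> upm a b" "(s, t) \<in> upm c d" by (auto simp: upm2_def)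
  then obtain v w where v: "eval s v = a" "eval t v = b" "eval s w = c" "eval t w = d"
    "monolinear (s, t)" by (auto simp: upm_def)
  show ?thesis
  proof (cases "nocc t = 0")
    case True
    then show ?thesis using v eval_lin[of t v] eval_lin[of t w] by simp
  next
    case False
    then have "nocc t = 1" "nocc s = 1" using v(5) by (auto simp: monolinear_def)
    then show ?thesis using v eval_lin[of t v] eval_lin[of t w] eval_lin[of s v] eval_lin[of s w]
      by simp
  qed
qed

theorem mainTheorem7:
  fixes a b c d :: int
  shows "analogy_SY a b c d \<longleftrightarrow> analogy_m a b c d"
proof
  assume "analogy_SY a b c d"
  then have "a - b = c - d" by (auto simp: analogy_SY_def)
  then show "analogy_m a b c d"
    by (auto simp: analogy_m_def intro!: arrow_ok)
next
  assume "analogy_m a b c d"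
  then have "b = d \<or> a - b = c - d" "a = c \<or> b - a = d - c"
    using arrow_nec by (auto simp: analogy_m_def)
  then have "a - b = c - d" by auto
  then show "analogy_SY a b c d"
    unfolding analogy_SY_def by (rule_tac x=a in exI, rule_tac x=b in exI,
      rule_tac x=0 in exI, rule_tac x="c - a" in exI) simp
qed

end
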